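(* Let $N\in\mathbb N$, $\beta\ge0$, and let $\boldsymbol c^{(1)},\boldsymbol c^{(2)}$ be $N\times N$ matrices with nonnegative entries. Then $$\big|p_N(\beta,\boldsymbol c^{(2)})-p_N(\beta,\boldsymbol c^{(1)})\big|\le\frac{\beta}{2N^2}\sum_{i,j=1}^N|c^{(2)}_{ij}-c^{(1)}_{ij}|.$$ In particular, for numbers $c_1,c_2\ge0$, $|p_N(\beta,c_2)-p_N(\beta,c_1)|\le\frac12\beta|c_2-c_1|$.
   Context: Fix an integer $q\ge2$, $[q]=\{1,\dots,q\}$. For $\sigma\in[q]^N$ and a real $N\times N$ matrix $J$, $H_N(\sigma,J)=\sum_{i,j=1}^N J_{ij}\delta(\sigma_i,\sigma_j)$ and $Z_N(J)=\sum_{\sigma\in[q]^N}e^{-H_N(\sigma,J)}$. For a matrix $\boldsymbol c=(c_{ij})$ with nonnegative entries, $\mathbb E_{N,\boldsymbol c}$ is expectation over a random matrix $J$ with independent entries $J_{ij}\sim$ Poisson with mean $c_{ij}/(2N)$, and $p_N(\beta,\boldsymbol c)=\mathbb E_{N,\boldsymbol c}[N^{-1}\ln Z_N(\beta J)]$. For a number $c\ge0$, $p_N(\beta,c)$ means $p_N(\beta,\boldsymbol c)$ with $c_{ij}=c$ for all $i,j$. *)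

theory Defs
  imports "HOL-Probability.Probability"
begin

text \<open>Poisson distribution with mean r >= 0 (the library's poisson_pmf requires r > 0;
  mean 0 is the point mass at 0).\<close>
definition pois :: "real \<Rightarrow> nat pmf" where
  "pois r = (if r = 0 then return_pmf 0 else poisson_pmf r)"

definition configs :: "nat \<Rightarrow> nat \<Rightarrow> (nat \<Rightarrow> nat) set" where
  "configs q N = PiE {1..N} (\<lambda>_. {1..q})"

definition hamil :: "nat \<Rightarrow> (nat \<Rightarrow> nat) \<Rightarrow> (nat \<Rightarrow> nat \<Rightarrow> real) \<Rightarrow> real" where
  "hamil N \<sigma> J = (\<Sum>i=1..N. \<Sum>j=1..N. J i j * (if \<sigma> i = \<sigma> j then 1 else 0))"

definition partfun :: "nat \<Rightarrow> nat \<Rightarrow> (nat \<Rightarrow> nat \<Rightarrow> real) \<Rightarrow> real" where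
  "partfun q N J = (\<Sum>\<sigma>\<in>configs q N. exp (- hamil N \<sigma> J))"

definition Jlaw :: "nat \<Rightarrow> (nat \<Rightarrow> nat \<Rightarrow> real) \<Rightarrow> (nat \<times> nat \<Rightarrow> nat) pmf" where
  "Jlaw N c = Pi_pmf ({1..N} \<times> {1..N}) 0 (\<lambda>(i,j). pois (c i j / (2 * real N)))"

definition pN :: "nat \<Rightarrow> nat \<Rightarrow> real \<Rightarrow> (nat \<Rightarrow> nat \<Rightarrow> real) \<Rightarrow> real" where
  "pN q N \<beta> c = measure_pmf.expectation (Jlaw N c)
     (\<lambda>J. ln (partfun q N (\<lambda>i j. \<beta> * real (J (i,j)))) / real N)"

end

theory Submission
  imports Defs
begin


lemma pmf_map_add: "pmf (map_pmf ((+) (x::nat)) M) n = (if x \<le> n then pmf M (n - x) else 0)"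
proof (cases "x \<le> n")
  case True
  have "pmf (map_pmf ((+) x) M) (x + (n - x)) = pmf M (n - x)"
    by (rule pmf_map_inj') (auto simp: inj_def)
  with True show ?thesis by simp
next
  case False
  then have "n \<notin> set_pmf (map_pmf ((+) x) M)" by auto
  with False show ?thesis by (metis set_pmf_iff)
qed

lemma pois_conv:
  assumes "a \<ge> 0" "d \<ge> 0"
  shows "pois (a + d) = bind_pmf (pois a) (\<lambda>x. map_pmf ((+) x) (pois d))"
proof (cases "a = 0")
  case True
  have "((+) (0::nat)) = id" by auto
  with True show ?thesis by (simp add: pois_def bind_return_pmf)
next
  case a: False
  show ?thesis
  proof (cases "d = 0")
    case True then show ?thesis using a by (simp add: pois_def bind_return_pmf')
  next
    case d: False
    have ap: "a > 0" and dp: "d > 0" using a d assms by auto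
    show ?thesis
    proof (rule pmf_eqI)
      fix n :: nat
      have "pmf (bind_pmf (pois a) (\<lambda>x. map_pmf ((+) x) (pois d))) n
          = (\<integral>x. pmf (map_pmf ((+) x) (pois d)) n \<partial>measure_pmf (pois a))"
        by (rule pmf_bind)
      also have "\<dots> = (\<Sum>x\<in>{..n}. pmf (map_pmf ((+) x) (pois d)) n * pmf (pois a) x)"
        by (rule integral_measure_pmf_real) (auto simp: pmf_map_add split: if_splits)
      also have "\<dots> = (\<Sum>x\<in>{..n}. (d ^ (n-x) / fact (n-x) * exp (-d)) * (a ^ x / fact x * exp (-a)))"
        using ap dp by (intro sum.cong) (auto simp: pmf_map_add pois_def)
      also have "\<dots> = exp (-(a+d)) / fact n * (\<Sum>x\<in>{..n}. of_nat (n choose x) * a ^ x * d ^ (n-x))"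
        unfolding sum_distrib_left
      proof (intro sum.cong refl)
        fix x assume "x \<in> {..n}"
        then have "x \<le> n" by simp
        then have "real (n choose x) = fact n / (fact x * fact (n-x))"
          by (simp add: binomial_fact)
        moreover have e: "exp (-(a+d)) = exp (-a) * exp (-d)" by (simp add: exp_add[symmetric])
        ultimately show "(d ^ (n-x) / fact (n-x) * exp (-d)) * (a ^ x / fact x * exp (-a)) =
            exp (-(a+d)) / fact n * (of_nat (n choose x) * a ^ x * d ^ (n-x))"
          by (simp add: field_simps)
      qed
      also have "\<dots> = (a + d) ^ n / fact n * exp (-(a+d))"
        by (simp add: binomial_ring)
      also have "\<dots> = pmf (pois (a+d)) n"
        using ap dp by (simp add: pois_def)
      finally show "pmf (pois (a + d)) n = pmf (bind_pmf (pois a) (\<lambda>x. map_pmf ((+) x) (pois d))) n" ..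
    qed
  qed
qed

lemma pois_mean:
  assumes "r \<ge> 0"
  shows "(\<integral>\<^sup>+x. ennreal (real x) \<partial>measure_pmf (pois r)) = ennreal r"
proof (cases "r = 0")
  case True then show ?thesis by (simp add: pois_def)
next
  case False
  then have rp: "r > 0" using assms by simp
  define g where "g k = real k * (r ^ k / fact k * exp (-r))" for k
  have s0: "(\<lambda>k. r ^ k / fact k) sums exp r"
    using exp_converges[of r] by (simp add: divide_inverse mult.commute)
  have "(\<lambda>k. g (Suc k)) sums (r * exp (-r) * exp r)"
  proof -
    have "(\<lambda>k. r * exp (-r) * (r ^ k / fact k)) sums (r * exp (-r) * exp r)"
      by (intro sums_mult s0)
    moreover have "g (Suc k) = r * exp (-r) * (r ^ k / fact k)" for k
    proof -
      have "real (Suc k) * (r ^ Suc k / fact (Suc k)) = r * (r ^ k / fact k)"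
        by (simp add: fact_Suc del: of_nat_Suc)
      then show ?thesis by (simp add: g_def field_simps del: of_nat_Suc)
    qed
    ultimately show ?thesis by simp
  qed
  then have "g sums (r * exp (-r) * exp r + g 0)" by (simp only: sums_Suc_iff)
  moreover have "r * exp (-r) * exp r + g 0 = r" by (simp add: g_def exp_minus)
  ultimately have gs: "g sums r" by simp
  have "(\<integral>\<^sup>+x. ennreal (real x) \<partial>measure_pmf (pois r)) = (\<integral>\<^sup>+x. ennreal (g x) \<partial>count_space UNIV)"
    using False by (simp add: nn_integral_measure_pmf pois_def rp g_def ennreal_mult'[symmetric] mult.commute)
  also have "\<dots> = (\<Sum>x. ennreal (g x))" by (simp add: nn_integral_count_space_nat)
  also have "\<dots> = ennreal r"
    using gs rp by (subst suminf_ennreal2) (auto simp: g_def sums_iff sums_unique2 intro!: mult_nonneg_nonneg)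
  finally show ?thesis .
qed



lemma Pi_coupling:
  fixes S :: "'a set"
  assumes S: "finite S" and l: "\<And>p. p \<in> S \<Longrightarrow> l p \<ge> 0" and d: "\<And>p. p \<in> S \<Longrightarrow> d p \<ge> 0"
  shows "Pi_pmf S 0 (\<lambda>p. pois (l p + d p)) =
     map_pmf (\<lambda>(J,K) p. J p + K p) (pair_pmf (Pi_pmf S (0::nat) (\<lambda>p. pois (l p))) (Pi_pmf S (0::nat) (\<lambda>p. pois (d p))))"
proof -
  have "Pi_pmf S 0 (\<lambda>p. pois (l p + d p)) =
        Pi_pmf S 0 (\<lambda>p. bind_pmf (pois (l p)) (\<lambda>x. bind_pmf (pois (d p)) (\<lambda>y. return_pmf (x + y))))"
    using l d by (intro Pi_pmf_cong refl) (simp add: pois_conv map_pmf_def)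
  also have "\<dots> = bind_pmf (Pi_pmf S 0 (\<lambda>p. pois (l p)))
        (\<lambda>J. Pi_pmf S 0 (\<lambda>p. bind_pmf (pois (d p)) (\<lambda>y. return_pmf (J p + y))))"
    by (rule Pi_pmf_bind[OF S])
  also have "\<dots> = bind_pmf (Pi_pmf S 0 (\<lambda>p. pois (l p)))
        (\<lambda>J. bind_pmf (Pi_pmf S 0 (\<lambda>p. pois (d p))) (\<lambda>K. return_pmf (\<lambda>p. if p \<in> S then J p + K p else 0)))"
    by (intro bind_pmf_cong refl) (simp add: Pi_pmf_bind[OF S, where d'=0] S)
  also have "\<dots> = bind_pmf (Pi_pmf S 0 (\<lambda>p. pois (l p)))
        (\<lambda>J. bind_pmf (Pi_pmf S 0 (\<lambda>p. pois (d p))) (\<lambda>K. return_pmf (\<lambda>p. J p + K p)))"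
  proof (intro bind_pmf_cong refl arg_cong[of _ _ return_pmf])
    fix J K assume J: "J \<in> set_pmf (Pi_pmf S 0 (\<lambda>p. pois (l p)))" and K: "K \<in> set_pmf (Pi_pmf S 0 (\<lambda>p. pois (d p)))"
    have "J x = 0" "K x = 0" if "x \<notin> S" for x
      using set_Pi_pmf_subset[OF S, of 0 "\<lambda>p. pois (l p)"] set_Pi_pmf_subset[OF S, of 0 "\<lambda>p. pois (d p)"] J K that by auto
    then show "(\<lambda>p. if p \<in> S then J p + K p else 0) = (\<lambda>p. J p + K p)" by (auto simp: fun_eq_iff)
  qed
  also have "\<dots> = map_pmf (\<lambda>(J,K) p. J p + K p) (pair_pmf (Pi_pmf S (0::nat) (\<lambda>p. pois (l p))) (Pi_pmf S (0::nat) (\<lambda>p. pois (d p))))"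
    by (simp add: map_pmf_def pair_pmf_def bind_assoc_pmf bind_return_pmf)
  finally show ?thesis .
qed



definition SK :: "nat \<Rightarrow> (nat \<times> nat \<Rightarrow> nat) \<Rightarrow> real" where
  "SK N K = (\<Sum>i=1..N. \<Sum>j=1..N. real (K (i,j)))"

definition Zf :: "nat \<Rightarrow> nat \<Rightarrow> real \<Rightarrow> (nat \<times> nat \<Rightarrow> nat) \<Rightarrow> real" where
  "Zf q N \<beta> J = partfun q N (\<lambda>i j. \<beta> * real (J (i,j)))"

definition phi :: "nat \<Rightarrow> nat \<Rightarrow> real \<Rightarrow> (nat \<times> nat \<Rightarrow> nat) \<Rightarrow> real" where
  "phi q N \<beta> J = ln q - ln (Zf q N \<beta> J) / N"

lemma configs_fin: "finite (configs q N)"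
  by (simp add: configs_def finite_PiE)

lemma configs_ne: "q \<ge> 1 \<Longrightarrow> configs q N \<noteq> {}"
  by (simp add: configs_def PiE_eq_empty_iff)

lemma hamil_add: "hamil N \<sigma> (\<lambda>i j. \<beta> * real (J (i,j) + K (i,j))) =
   hamil N \<sigma> (\<lambda>i j. \<beta> * real (J (i,j))) + hamil N \<sigma> (\<lambda>i j. \<beta> * real (K (i,j)))"
  unfolding hamil_def by (simp add: sum.distrib[symmetric] algebra_simps)

lemma hamil_nonneg: "\<beta> \<ge> 0 \<Longrightarrow> hamil N \<sigma> (\<lambda>i j. \<beta> * real (K (i,j))) \<ge> 0"
  unfolding hamil_def by (intro sum_nonneg) auto

lemma hamil_le: "\<beta> \<ge> 0 \<Longrightarrow> hamil N \<sigma> (\<lambda>i j. \<beta> * real (K (i,j))) \<le> \<beta> * SK N K"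
  unfolding hamil_def SK_def sum_distrib_left by (intro sum_mono) auto

lemma Z_pos: "q \<ge> 1 \<Longrightarrow> Zf q N \<beta> J > 0"
  unfolding Zf_def partfun_def using configs_fin configs_ne by (intro sum_pos) auto

lemma Z_mono: "\<beta> \<ge> 0 \<Longrightarrow> Zf q N \<beta> (\<lambda>p. J p + K p) \<le> Zf q N \<beta> J"
  unfolding Zf_def partfun_def
proof (intro sum_mono)
  fix \<sigma> assume "\<beta> \<ge> 0"
  then show "exp (- hamil N \<sigma> (\<lambda>i j. \<beta> * real (J (i, j) + K (i, j)))) \<le> exp (- hamil N \<sigma> (\<lambda>i j. \<beta> * real (J (i, j))))"
    unfolding hamil_add using hamil_nonneg[of \<beta> N \<sigma> K] by simp
qed

lemma Z_low: "\<beta> \<ge> 0 \<Longrightarrow> exp (- (\<beta> * SK N K)) * Zf q N \<beta> J \<le> Zf q N \<beta> (\<lambda>p. J p + K p)"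
  unfolding Zf_def partfun_def sum_distrib_left
proof (intro sum_mono)
  fix \<sigma> assume "\<beta> \<ge> 0"
  then have "exp (- (\<beta> * SK N K)) * exp (- hamil N \<sigma> (\<lambda>i j. \<beta> * real (J (i, j))))
     = exp (- (\<beta> * SK N K) - hamil N \<sigma> (\<lambda>i j. \<beta> * real (J (i, j))))" by (simp add: exp_diff exp_minus field_simps)
  also have "\<dots> \<le> exp (- hamil N \<sigma> (\<lambda>i j. \<beta> * real (J (i, j) + K (i, j))))"
    unfolding hamil_add using hamil_le[OF \<open>\<beta> \<ge> 0\<close>, of N \<sigma> K] by simp
  finally show "exp (- (\<beta> * SK N K)) * exp (- hamil N \<sigma> (\<lambda>i j. \<beta> * real (J (i, j))))
     \<le> exp (- hamil N \<sigma> (\<lambda>i j. \<beta> * real (J (i, j) + K (i, j))))" .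
qed

lemma Z_zero: "Zf q N \<beta> (\<lambda>_. 0) = real q ^ N"
proof -
  have "Zf q N \<beta> (\<lambda>_. 0) = real (card (configs q N))"
    unfolding Zf_def partfun_def hamil_def by simp
  also have "card (configs q N) = q ^ N"
    by (simp add: configs_def card_PiE)
  finally show ?thesis by simp
qed

lemma phi_incr:
  assumes "q \<ge> 1" "\<beta> \<ge> 0" "N \<ge> 1"
  shows "phi q N \<beta> J \<le> phi q N \<beta> (\<lambda>p. J p + K p)"
    and "phi q N \<beta> (\<lambda>p. J p + K p) \<le> phi q N \<beta> J + \<beta> * SK N K / N"
proof -
  have p1: "Zf q N \<beta> J > 0" and p2: "Zf q N \<beta> (\<lambda>p. J p + K p) > 0" using Z_pos assms by auto
  have "ln (Zf q N \<beta> (\<lambda>p. J p + K p)) \<le> ln (Zf q N \<beta> J)"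
    using Z_mono[OF assms(2)] p1 p2 by simp
  then show "phi q N \<beta> J \<le> phi q N \<beta> (\<lambda>p. J p + K p)"
    using assms unfolding phi_def by (simp add: divide_right_mono)
  have "ln (exp (- (\<beta> * SK N K)) * Zf q N \<beta> J) \<le> ln (Zf q N \<beta> (\<lambda>p. J p + K p))"
    using Z_low[OF assms(2)] p1 p2 by simp
  then have "ln (Zf q N \<beta> J) - \<beta> * SK N K \<le> ln (Zf q N \<beta> (\<lambda>p. J p + K p))"
    using p1 by (simp add: ln_mult)
  then have "(ln (Zf q N \<beta> J) - \<beta> * SK N K) / N \<le> ln (Zf q N \<beta> (\<lambda>p. J p + K p)) / N"
    using assms by (simp add: divide_right_mono)
  then show "phi q N \<beta> (\<lambda>p. J p + K p) \<le> phi q N \<beta> J + \<beta> * SK N K / N"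
    unfolding phi_def by (simp add: diff_divide_distrib)
qed

lemma phi_zero: "q \<ge> 1 \<Longrightarrow> N \<ge> 1 \<Longrightarrow> phi q N \<beta> (\<lambda>_. 0) = 0"
  unfolding phi_def Z_zero by (simp add: ln_realpow)

lemma phi_bounds:
  assumes "q \<ge> 1" "\<beta> \<ge> 0" "N \<ge> 1"
  shows "0 \<le> phi q N \<beta> J" "phi q N \<beta> J \<le> \<beta> * SK N J / N"
  using phi_incr[OF assms, of "\<lambda>_. 0" J] phi_zero[of q N \<beta>] assms by auto



definition PP :: "nat \<Rightarrow> (nat \<times> nat \<Rightarrow> real) \<Rightarrow> (nat \<times> nat \<Rightarrow> nat) pmf" where
  "PP N lam = Pi_pmf ({1..N} \<times> {1..N}) 0 (\<lambda>p. pois (lam p))"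

definition Phi :: "nat \<Rightarrow> nat \<Rightarrow> real \<Rightarrow> (nat \<times> nat \<Rightarrow> real) \<Rightarrow> ennreal" where
  "Phi q N \<beta> lam = (\<integral>\<^sup>+J. ennreal (phi q N \<beta> J) \<partial>measure_pmf (PP N lam))"

lemma comp_mean:
  assumes "i \<in> {1..N}" "j \<in> {1..N}" "lam (i,j) \<ge> 0"
  shows "(\<integral>\<^sup>+K. ennreal (real (K (i,j))) \<partial>measure_pmf (PP N lam)) = ennreal (lam (i,j))"
proof -
  have "(\<integral>\<^sup>+K. ennreal (real (K (i,j))) \<partial>measure_pmf (PP N lam))
      = (\<integral>\<^sup>+x. ennreal (real x) \<partial>measure_pmf (map_pmf (\<lambda>K. K (i,j)) (PP N lam)))"
    by simp
  also have "map_pmf (\<lambda>K. K (i,j)) (PP N lam) = pois (lam (i,j))"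
    unfolding PP_def using assms by (subst Pi_pmf_component) auto
  finally show ?thesis using pois_mean assms by simp
qed

lemma SK_mean:
  assumes "\<And>p. p \<in> {1..N} \<times> {1..N} \<Longrightarrow> lam p \<ge> 0"
  shows "(\<integral>\<^sup>+K. ennreal (SK N K) \<partial>measure_pmf (PP N lam)) = ennreal (\<Sum>i=1..N. \<Sum>j=1..N. lam (i,j))"
proof -
  have "(\<integral>\<^sup>+K. ennreal (SK N K) \<partial>measure_pmf (PP N lam))
     = (\<integral>\<^sup>+K. (\<Sum>i=1..N. \<Sum>j=1..N. ennreal (real (K (i,j)))) \<partial>measure_pmf (PP N lam))"
    unfolding SK_def by (intro nn_integral_cong) (simp add: sum_nonneg)
  also have "\<dots> = (\<Sum>i=1..N. \<Sum>j=1..N. (\<integral>\<^sup>+K. ennreal (real (K (i,j))) \<partial>measure_pmf (PP N lam)))"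
    by (simp add: nn_integral_sum del: sum_ennreal)
  also have "\<dots> = (\<Sum>i=1..N. \<Sum>j=1..N. ennreal (lam (i,j)))"
    using assms by (intro sum.cong refl) (simp add: comp_mean)
  also have "\<dots> = (\<Sum>i=1..N. ennreal (\<Sum>j=1..N. lam (i,j)))"
    using assms by (intro sum.cong refl sum_ennreal) auto
  also have "\<dots> = ennreal (\<Sum>i=1..N. \<Sum>j=1..N. lam (i,j))"
    using assms by (intro sum_ennreal sum_nonneg) auto
  finally show ?thesis .
qed

lemma Phi_bounds:
  assumes q: "q \<ge> 1" and b: "\<beta> \<ge> 0" and N: "N \<ge> 1"
    and l: "\<And>p. p \<in> {1..N} \<times> {1..N} \<Longrightarrow> l p \<ge> 0"
    and d: "\<And>p. p \<in> {1..N} \<times> {1..N} \<Longrightarrow> d p \<ge> 0"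
  shows "Phi q N \<beta> l \<le> Phi q N \<beta> (\<lambda>p. l p + d p)"
    and "Phi q N \<beta> (\<lambda>p. l p + d p) \<le> Phi q N \<beta> l + ennreal (\<beta> / N * (\<Sum>i=1..N. \<Sum>j=1..N. d (i,j)))"
proof -
  have eq: "Phi q N \<beta> (\<lambda>p. l p + d p) =
     (\<integral>\<^sup>+J. \<integral>\<^sup>+K. ennreal (phi q N \<beta> (\<lambda>p. J p + K p)) \<partial>measure_pmf (PP N d) \<partial>measure_pmf (PP N l))"
    unfolding Phi_def PP_def
    by (subst Pi_coupling) (use l d in \<open>auto simp: nn_integral_pair_pmf'\<close>)
  have "Phi q N \<beta> l = (\<integral>\<^sup>+J. \<integral>\<^sup>+K. ennreal (phi q N \<beta> J) \<partial>measure_pmf (PP N d) \<partial>measure_pmf (PP N l))"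
    unfolding Phi_def by (simp add: measure_pmf.emeasure_space_1)
  also have "\<dots> \<le> (\<integral>\<^sup>+J. \<integral>\<^sup>+K. ennreal (phi q N \<beta> (\<lambda>p. J p + K p)) \<partial>measure_pmf (PP N d) \<partial>measure_pmf (PP N l))"
    using phi_incr(1)[OF q b N] by (intro nn_integral_mono ennreal_leI) auto
  finally show "Phi q N \<beta> l \<le> Phi q N \<beta> (\<lambda>p. l p + d p)" using eq by simp
  have "Phi q N \<beta> (\<lambda>p. l p + d p) \<le>
     (\<integral>\<^sup>+J. \<integral>\<^sup>+K. ennreal (phi q N \<beta> J) + ennreal (\<beta> / N) * ennreal (SK N K) \<partial>measure_pmf (PP N d) \<partial>measure_pmf (PP N l))"
    unfolding eq
  proof (intro nn_integral_mono)
    fix J K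
    have "ennreal (phi q N \<beta> (\<lambda>p. J p + K p)) \<le> ennreal (phi q N \<beta> J + \<beta> / N * SK N K)"
      using phi_incr(2)[OF q b N, of J K] by (intro ennreal_leI) simp
    also have "\<dots> = ennreal (phi q N \<beta> J) + ennreal (\<beta> / N) * ennreal (SK N K)"
      using phi_bounds(1)[OF q b N, of J] b ennreal_mult'[of "\<beta> / N" "SK N K"]
      by (simp add: ennreal_plus SK_def sum_nonneg)
    finally show "ennreal (phi q N \<beta> (\<lambda>p. J p + K p)) \<le> ennreal (phi q N \<beta> J) + ennreal (\<beta> / N) * ennreal (SK N K)" .
  qed
  also have "\<dots> = (\<integral>\<^sup>+J. ennreal (phi q N \<beta> J) + ennreal (\<beta> / N) * ennreal (\<Sum>i=1..N. \<Sum>j=1..N. d (i,j)) \<partial>measure_pmf (PP N l))"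
    using SK_mean[of N d] d by (simp add: nn_integral_add nn_integral_cmult measure_pmf.emeasure_space_1)
  also have "\<dots> = Phi q N \<beta> l + ennreal (\<beta> / N * (\<Sum>i=1..N. \<Sum>j=1..N. d (i,j)))"
    unfolding Phi_def using b d ennreal_mult'[of "\<beta> / N" "\<Sum>i=1..N. \<Sum>j=1..N. d (i,j)"]
    by (simp add: nn_integral_add measure_pmf.emeasure_space_1)
  finally show "Phi q N \<beta> (\<lambda>p. l p + d p) \<le> Phi q N \<beta> l + ennreal (\<beta> / N * (\<Sum>i=1..N. \<Sum>j=1..N. d (i,j)))" .
qed

lemma Phi_fin:
  assumes q: "q \<ge> 1" and b: "\<beta> \<ge> 0" and N: "N \<ge> 1"
    and l: "\<And>p. p \<in> {1..N} \<times> {1..N} \<Longrightarrow> l p \<ge> 0"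
  shows "Phi q N \<beta> l \<le> ennreal (\<beta> / N * (\<Sum>i=1..N. \<Sum>j=1..N. l (i,j)))"
proof -
  have "Phi q N \<beta> (\<lambda>_. 0) = 0"
    unfolding Phi_def PP_def by (simp add: pois_def phi_zero[OF q N])
  then show ?thesis using Phi_bounds(2)[OF q b N, of "\<lambda>_. 0" l] l by simp
qed



lemma pN_eq:
  assumes q: "q \<ge> 1" and b: "\<beta> \<ge> 0" and N: "N \<ge> 1"
    and l: "\<And>p. p \<in> {1..N} \<times> {1..N} \<Longrightarrow> l p \<ge> 0"
  shows "measure_pmf.expectation (PP N l) (\<lambda>J. ln (partfun q N (\<lambda>i j. \<beta> * real (J (i,j)))) / real N)
     = ln q - enn2real (Phi q N \<beta> l)"
proof -
  have fin: "(\<integral>\<^sup>+J. ennreal (phi q N \<beta> J) \<partial>measure_pmf (PP N l)) < \<infinity>"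
    using Phi_fin[of q \<beta> N l, OF q b N l] unfolding Phi_def by (simp add: le_less_trans)
  have int: "integrable (measure_pmf (PP N l)) (phi q N \<beta>)"
    by (rule integrableI_nonneg) (use fin phi_bounds(1)[OF q b N] in auto)
  have "measure_pmf.expectation (PP N l) (\<lambda>J. ln (partfun q N (\<lambda>i j. \<beta> * real (J (i,j)))) / real N)
     = measure_pmf.expectation (PP N l) (\<lambda>J. ln q - phi q N \<beta> J)"
    by (intro Bochner_Integration.integral_cong refl) (simp add: phi_def Zf_def)
  also have "\<dots> = ln q - measure_pmf.expectation (PP N l) (phi q N \<beta>)"
    using int by (subst Bochner_Integration.integral_diff) auto
  also have "measure_pmf.expectation (PP N l) (phi q N \<beta>) = enn2real (Phi q N \<beta> l)"
    unfolding Phi_def by (rule integral_eq_nn_integral) (use phi_bounds(1)[OF q b N] in auto)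
  finally show ?thesis .
qed

lemma main_ineq:
  assumes q: "q \<ge> 1" and b: "\<beta> \<ge> 0" and N: "N \<ge> 1"
    and l1: "\<And>p. p \<in> {1..N} \<times> {1..N} \<Longrightarrow> l1 p \<ge> 0"
    and l2: "\<And>p. p \<in> {1..N} \<times> {1..N} \<Longrightarrow> l2 p \<ge> 0"
  shows "\<bar>enn2real (Phi q N \<beta> l2) - enn2real (Phi q N \<beta> l1)\<bar>
     \<le> \<beta> / N * (\<Sum>i=1..N. \<Sum>j=1..N. \<bar>l2 (i,j) - l1 (i,j)\<bar>)"
proof -
  define l3 where "l3 p = max (l1 p) (l2 p)" for p
  define d1 where "d1 p = l3 p - l1 p" for p
  define d2 where "d2 p = l3 p - l2 p" for p
  have e1: "(\<lambda>p. l1 p + d1 p) = l3" and e2: "(\<lambda>p. l2 p + d2 p) = l3"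
    by (auto simp: d1_def d2_def)
  have d1: "\<And>p. d1 p \<ge> 0" and d2: "\<And>p. d2 p \<ge> 0" by (auto simp: d1_def d2_def l3_def)
  have l3: "\<And>p. p \<in> {1..N} \<times> {1..N} \<Longrightarrow> l3 p \<ge> 0" using l1 by (auto simp: l3_def le_max_iff_disj)
  define D1 where "D1 = (\<Sum>i=1..N. \<Sum>j=1..N. d1 (i,j))"
  define D2 where "D2 = (\<Sum>i=1..N. \<Sum>j=1..N. d2 (i,j))"
  have D1: "D1 \<ge> 0" and D2: "D2 \<ge> 0" using d1 d2 by (auto simp: D1_def D2_def intro!: sum_nonneg)
  have "D1 + D2 = (\<Sum>i=1..N. \<Sum>j=1..N. \<bar>l2 (i,j) - l1 (i,j)\<bar>)"
    unfolding D1_def D2_def sum.distrib[symmetric] by (intro sum.cong refl) (auto simp: d1_def d2_def l3_def max_def)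
  have c: "b \<ge> 0 \<Longrightarrow> \<beta> / N * b \<ge> 0" for b using b by simp
  have a1: "Phi q N \<beta> l1 \<le> Phi q N \<beta> l3" "Phi q N \<beta> l3 \<le> Phi q N \<beta> l1 + ennreal (\<beta> / N * D1)"
    using Phi_bounds[of q \<beta> N l1 d1, OF q b N l1] d1 unfolding e1 D1_def by auto
  have a2: "Phi q N \<beta> l2 \<le> Phi q N \<beta> l3" "Phi q N \<beta> l3 \<le> Phi q N \<beta> l2 + ennreal (\<beta> / N * D2)"
    using Phi_bounds[of q \<beta> N l2 d2, OF q b N l2] d2 unfolding e2 D2_def by auto
  have f1: "Phi q N \<beta> l1 \<noteq> \<top>" using Phi_fin[of q \<beta> N l1, OF q b N l1] by (auto simp: top_unique)
  have f2: "Phi q N \<beta> l2 \<noteq> \<top>" using Phi_fin[of q \<beta> N l2, OF q b N l2] by (auto simp: top_unique)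
  have f3: "Phi q N \<beta> l3 \<noteq> \<top>" using Phi_fin[of q \<beta> N l3, OF q b N l3] by (auto simp: top_unique)
  obtain r1 where r1: "Phi q N \<beta> l1 = ennreal r1" "r1 \<ge> 0" using f1 by (cases "Phi q N \<beta> l1" rule: ennreal_cases) auto
  obtain r2 where r2: "Phi q N \<beta> l2 = ennreal r2" "r2 \<ge> 0" using f2 by (cases "Phi q N \<beta> l2" rule: ennreal_cases) auto
  obtain r3 where r3: "Phi q N \<beta> l3 = ennreal r3" "r3 \<ge> 0" using f3 by (cases "Phi q N \<beta> l3" rule: ennreal_cases) auto
  have s1: "ennreal r1 + ennreal (\<beta> / N * D1) = ennreal (r1 + \<beta> / N * D1)"
    using r1(2) c[OF D1] by (rule ennreal_plus[symmetric])
  have s2: "ennreal r2 + ennreal (\<beta> / N * D2) = ennreal (r2 + \<beta> / N * D2)"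
    using r2(2) c[OF D2] by (rule ennreal_plus[symmetric])
  have "ennreal r1 \<le> ennreal r3" "ennreal r3 \<le> ennreal (r1 + \<beta> / N * D1)"
       "ennreal r2 \<le> ennreal r3" "ennreal r3 \<le> ennreal (r2 + \<beta> / N * D2)"
    using a1 a2 unfolding r1(1) r2(1) r3(1) s1 s2 by auto
  then have "r1 \<le> r3" "r3 \<le> r1 + \<beta> / N * D1" "r2 \<le> r3" "r3 \<le> r2 + \<beta> / N * D2"
    using r1(2) r2(2) r3(2) c[OF D1] c[OF D2] by (simp_all add: ennreal_le_iff del: ennreal_plus)
  moreover have "\<beta> / N * (D1 + D2) = \<beta> / N * D1 + \<beta> / N * D2" by (simp add: distrib_left)
  ultimately have "\<bar>r2 - r1\<bar> \<le> \<beta> / N * (D1 + D2)" by linarith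
  then show ?thesis using r1 r2 \<open>D1 + D2 = _\<close> by simp
qed



lemma pN_Phi:
  assumes q: "q \<ge> 1" and b: "\<beta> \<ge> 0" and N: "N \<ge> 1"
    and c: "\<And>i j. i \<in> {1..N} \<Longrightarrow> j \<in> {1..N} \<Longrightarrow> c i j \<ge> 0"
  shows "pN q N \<beta> c = ln q - enn2real (Phi q N \<beta> (\<lambda>(i,j). c i j / (2 * real N)))"
proof -
  have "Jlaw N c = PP N (\<lambda>(i,j). c i j / (2 * real N))"
    unfolding Jlaw_def PP_def by (intro arg_cong[where f="Pi_pmf _ _"]) (auto simp: fun_eq_iff)
  then show ?thesis unfolding pN_def
    by (simp only:) (rule pN_eq[OF q b N], use c in auto)
qed

lemma part1:
  fixes q N :: nat and \<beta> :: real and c1 c2 :: "nat \<Rightarrow> nat \<Rightarrow> real"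
  assumes q: "q \<ge> 1" and N: "N \<ge> 1" and b: "\<beta> \<ge> 0"
    and c1: "\<And>i j. i \<in> {1..N} \<Longrightarrow> j \<in> {1..N} \<Longrightarrow> c1 i j \<ge> 0"
    and c2: "\<And>i j. i \<in> {1..N} \<Longrightarrow> j \<in> {1..N} \<Longrightarrow> c2 i j \<ge> 0"
  shows "\<bar>pN q N \<beta> c2 - pN q N \<beta> c1\<bar>
           \<le> \<beta> / (2 * real N ^ 2) * (\<Sum>i=1..N. \<Sum>j=1..N. \<bar>c2 i j - c1 i j\<bar>)"
proof -
  define l1 where "l1 = (\<lambda>(i,j). c1 i j / (2 * real N))"
  define l2 where "l2 = (\<lambda>(i,j). c2 i j / (2 * real N))"
  have Np: "real N > 0" using N by simp
  have "\<bar>pN q N \<beta> c2 - pN q N \<beta> c1\<bar> = \<bar>enn2real (Phi q N \<beta> l2) - enn2real (Phi q N \<beta> l1)\<bar>"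
    using pN_Phi[of q \<beta> N c1, OF q b N c1] pN_Phi[of q \<beta> N c2, OF q b N c2] unfolding l1_def l2_def by simp
  also have "\<dots> \<le> \<beta> / N * (\<Sum>i=1..N. \<Sum>j=1..N. \<bar>l2 (i,j) - l1 (i,j)\<bar>)"
    by (rule main_ineq[OF q b N]) (use c1 c2 Np in \<open>auto simp: l1_def l2_def\<close>)
  also have "(\<Sum>i=1..N. \<Sum>j=1..N. \<bar>l2 (i,j) - l1 (i,j)\<bar>) = (\<Sum>i=1..N. \<Sum>j=1..N. \<bar>c2 i j - c1 i j\<bar>) / (2 * real N)"
    unfolding sum_divide_distrib l1_def l2_def using Np
    by (intro sum.cong refl) (simp add: diff_divide_distrib[symmetric] abs_divide)
  also have "\<beta> / N * ((\<Sum>i=1..N. \<Sum>j=1..N. \<bar>c2 i j - c1 i j\<bar>) / (2 * real N))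
     = \<beta> / (2 * real N ^ 2) * (\<Sum>i=1..N. \<Sum>j=1..N. \<bar>c2 i j - c1 i j\<bar>)"
    by (simp add: power2_eq_square field_simps)
  finally show ?thesis .
qed

theorem mainTheorem5:
  fixes q N :: nat and \<beta> :: real and c1 c2 :: "nat \<Rightarrow> nat \<Rightarrow> real"
  assumes "q \<ge> 2" and "N \<ge> 1" and "\<beta> \<ge> 0"
    and "\<And>i j. i \<in> {1..N} \<Longrightarrow> j \<in> {1..N} \<Longrightarrow> c1 i j \<ge> 0"
    and "\<And>i j. i \<in> {1..N} \<Longrightarrow> j \<in> {1..N} \<Longrightarrow> c2 i j \<ge> 0"
  shows "\<bar>pN q N \<beta> c2 - pN q N \<beta> c1\<bar>
           \<le> \<beta> / (2 * real N ^ 2) * (\<Sum>i=1..N. \<Sum>j=1..N. \<bar>c2 i j - c1 i j\<bar>)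
         \<and> (\<forall>a b::real. a \<ge> 0 \<longrightarrow> b \<ge> 0 \<longrightarrow>
           \<bar>pN q N \<beta> (\<lambda>_ _. b) - pN q N \<beta> (\<lambda>_ _. a)\<bar> \<le> \<beta> / 2 * \<bar>b - a\<bar>)"
proof
  have q: "q \<ge> 1" using assms(1) by simp
  show "\<bar>pN q N \<beta> c2 - pN q N \<beta> c1\<bar>
           \<le> \<beta> / (2 * real N ^ 2) * (\<Sum>i=1..N. \<Sum>j=1..N. \<bar>c2 i j - c1 i j\<bar>)"
    by (rule part1[of q N \<beta> c1 c2, OF q assms(2,3,4,5)])
  show "\<forall>a b::real. a \<ge> 0 \<longrightarrow> b \<ge> 0 \<longrightarrow>
           \<bar>pN q N \<beta> (\<lambda>_ _. b) - pN q N \<beta> (\<lambda>_ _. a)\<bar> \<le> \<beta> / 2 * \<bar>b - a\<bar>"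
  proof (intro allI impI)
    fix a b :: real assume a: "a \<ge> 0" and b: "b \<ge> 0"
    have "\<bar>pN q N \<beta> (\<lambda>_ _. b) - pN q N \<beta> (\<lambda>_ _. a)\<bar>
        \<le> \<beta> / (2 * real N ^ 2) * (\<Sum>i=1..N. \<Sum>j=1..N. \<bar>b - a\<bar>)"
      by (rule part1[of q N \<beta> "\<lambda>_ _. a" "\<lambda>_ _. b", OF q assms(2,3)]) (use a b in auto)
    also have "\<dots> = \<beta> / 2 * \<bar>b - a\<bar>"
      using assms(2) by (simp add: power2_eq_square field_simps)
    finally show "\<bar>pN q N \<beta> (\<lambda>_ _. b) - pN q N \<beta> (\<lambda>_ _. a)\<bar> \<le> \<beta> / 2 * \<bar>b - a\<bar>" .
  qed
qed

end
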